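(* Let $(\mathcal{R},\mu)$ be non-atomic with $\mu(\mathcal{R})=\infty$, let $\|\cdot\|_X$ be an r.i. quasi-Banach function norm on $\mathcal{M}(\mathcal{R},\mu)$ with fundamental function $\varphi_X$, and let $m_{\varphi_X}$ be the corresponding weak Marcinkiewicz space. Then $$(m_{\varphi_X})_a=\Big\{f\in m_{\varphi_X};\ \lim_{t\to0^+}\varphi_X(t)f^*(t)=\lim_{t\to\infty}\varphi_X(t)f^*(t)=0\Big\}.$$ In particular, $(m_{\varphi_X})_a\neq m_{\varphi_X}$, i.e. $m_{\varphi_X}$ does not have absolutely continuous quasinorm.
   Context: Let $(\mathcal{R},\mu)$ be a $\sigma$-finite measure space; $\mathcal{M}$ denotes the $\mu$-measurable extended complex-valued functions (identified a.e.), $\mathcal{M}_+$ the non-negative ones. $f_*(s)=\mu(\{|f|>s\})$, $f^*(t)=\inf\{s\ge0;\,f_*(s)\le t\}$ (non-increasing rearrangement). A quasi-Banach function norm is a map $\|\cdot\|:\mathcal{M}\to[0,\infty]$ with $\|f\|=\||f|\|$ such that on $\mathcal{M}_+$: (Q1) $\|af\|=|a|\|f\|$, $\|f\|=0\iff f=0$ a.e., and there is $C\ge1$ (modulus of concavity) with $\|f+g\|\le C(\|f\|+\|g\|)$; (P2) $f\le g$ a.e. implies $\|f\|\le\|g\|$; (P3) $f_n\uparrow f$ a.e. implies $\|f_n\|\uparrow\|f\|$; (P4) $\|\chi_E\|<\infty$ whenever $\mu(E)<\infty$. The norm is rearrangement-invariant (r.i.) if $\|f\|=\|g\|$ whenever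 $f^*=g^*$. The corresponding space is $X=\{f\in\mathcal{M};\,\|f\|_X<\infty\}$. A function $f\in X$ has absolutely continuous quasinorm if $\|f\chi_{E_k}\|_X\to0$ for every sequence of measurable sets $E_k$ with $\chi_{E_k}\to0$ $\mu$-a.e.; $X_a$ denotes the set of such functions. The fundamental function of $X$ is $\varphi_X(t)=\|\chi_{E_t}\|_X$ for $t\in[0,\infty)$, where $E_t\subseteq\mathcal{R}$ is any measurable set with $\mu(E_t)=t$. The weak Marcinkiewicz space $m_{\varphi_X}$ is the r.i. quasi-Banach function space given by the functional $\|f\|_{m_{\varphi_X}}=\sup_{t\in[0,\infty)}\varphi_X(t)f^*(t)$. *)

theory Defs
  imports "HOL-Analysis.Analysis"
begin

definition nonatomic :: "'a measure \<Rightarrow> bool" where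
  "nonatomic M \<longleftrightarrow> (\<forall>A\<in>sets M. 0 < emeasure M A \<longrightarrow>
     (\<exists>B\<in>sets M. B \<subseteq> A \<and> 0 < emeasure M B \<and> emeasure M B < emeasure M A))"

text \<open>Distribution function of a non-negative (extended) function g (g plays the role of |f|).\<close>
definition distf :: "'a measure \<Rightarrow> ('a \<Rightarrow> ennreal) \<Rightarrow> ennreal \<Rightarrow> ennreal" where
  "distf M g s = emeasure M {x \<in> space M. s < g x}"

definition rearr :: "'a measure \<Rightarrow> ('a \<Rightarrow> ennreal) \<Rightarrow> real \<Rightarrow> ennreal" where
  "rearr M g t = Inf {s. distf M g s \<le> ennreal t}"

definition modf :: "('a \<Rightarrow> complex) \<Rightarrow> 'a \<Rightarrow> ennreal" where
  "modf f = (\<lambda>x. ennreal (cmod (f x)))"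

text \<open>Quasi-Banach function norm, given by its values on non-negative measurable
  functions (the norm of f in M is that of |f|).\<close>
definition qbfn :: "'a measure \<Rightarrow> (('a \<Rightarrow> ennreal) \<Rightarrow> ennreal) \<Rightarrow> bool" where
  "qbfn M N \<longleftrightarrow>
    (\<forall>f\<in>borel_measurable M. \<forall>a::real. a \<ge> 0 \<longrightarrow> N (\<lambda>x. ennreal a * f x) = ennreal a * N f)
  \<and> (\<forall>f\<in>borel_measurable M. N f = 0 \<longleftrightarrow> (AE x in M. f x = 0))
  \<and> (\<exists>C::real. C \<ge> 1 \<and> (\<forall>f\<in>borel_measurable M. \<forall>g\<in>borel_measurable M.
        N (\<lambda>x. f x + g x) \<le> ennreal C * (N f + N g)))
  \<and> (\<forall>f\<in>borel_measurable M. \<forall>g\<in>borel_measurable M. (AE x in M. f x \<le> g x) \<longrightarrow> N f \<le> N g)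
  \<and> (\<forall>F f. (\<forall>n. F n \<in> borel_measurable M) \<longrightarrow> f \<in> borel_measurable M \<longrightarrow>
        (AE x in M. incseq (\<lambda>n. F n x) \<and> (\<lambda>n. F n x) \<longlonglongrightarrow> f x) \<longrightarrow>
        incseq (\<lambda>n. N (F n)) \<and> (\<lambda>n. N (F n)) \<longlonglongrightarrow> N f)
  \<and> (\<forall>E\<in>sets M. emeasure M E < \<infinity> \<longrightarrow> N (indicator E) < \<infinity>)"

definition rinv :: "'a measure \<Rightarrow> (('a \<Rightarrow> ennreal) \<Rightarrow> ennreal) \<Rightarrow> bool" where
  "rinv M N \<longleftrightarrow> (\<forall>f\<in>borel_measurable M. \<forall>g\<in>borel_measurable M.
      (\<forall>t\<ge>0. rearr M f t = rearr M g t) \<longrightarrow> N f = N g)"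

text \<open>Fundamental function: norm of the indicator of some set of measure t
  (well defined for r.i. norms on non-atomic spaces with infinite measure).\<close>
definition fundf :: "'a measure \<Rightarrow> (('a \<Rightarrow> ennreal) \<Rightarrow> ennreal) \<Rightarrow> real \<Rightarrow> ennreal" where
  "fundf M N t = N (indicator (SOME E. E \<in> sets M \<and> emeasure M E = ennreal t))"

definition marc :: "'a measure \<Rightarrow> (('a \<Rightarrow> ennreal) \<Rightarrow> ennreal) \<Rightarrow> ('a \<Rightarrow> ennreal) \<Rightarrow> ennreal" where
  "marc M N g = (SUP t\<in>{0::real..}. fundf M N t * rearr M g t)"

definition fspace :: "'a measure \<Rightarrow> (('a \<Rightarrow> ennreal) \<Rightarrow> ennreal) \<Rightarrow> ('a \<Rightarrow> complex) set" where
  "fspace M N = {f\<in>borel_measurable M. N (modf f) < \<infinity>}"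

definition acpart :: "'a measure \<Rightarrow> (('a \<Rightarrow> ennreal) \<Rightarrow> ennreal) \<Rightarrow> ('a \<Rightarrow> complex) set" where
  "acpart M N = {f\<in>fspace M N. \<forall>E::nat \<Rightarrow> 'a set. (\<forall>k. E k \<in> sets M) \<longrightarrow>
      (AE x in M. (\<lambda>k. indicator (E k) x :: real) \<longlonglongrightarrow> 0) \<longrightarrow>
      (\<lambda>k. N (\<lambda>x. modf f x * indicator (E k) x)) \<longlonglongrightarrow> 0}"

end

theory Submission
  imports Defs
begin



lemma halving:
  assumes na: "nonatomic M" and A: "A \<in> sets M" and pos: "0 < emeasure M A" and fin: "emeasure M A < \<infinity>"
  shows "\<exists>B\<in>sets M. B \<subseteq> A \<and> 0 < measure M B \<and> measure M B \<le> measure M A / 2^n"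
proof (induction n)
  case 0
  have "0 < measure M A" using pos fin by (simp add: emeasure_eq_ennreal_measure)
  then show ?case using A by auto
next
  case (Suc n)
  then obtain B where B: "B \<in> sets M" "B \<subseteq> A" "0 < measure M B" "measure M B \<le> measure M A / 2^n" by blast
  have finB: "emeasure M B \<noteq> \<infinity>" using B fin emeasure_mono[OF B(2) A] by (auto simp: top_unique)
  have "0 < emeasure M B" using B(3) finB by (simp add: emeasure_eq_ennreal_measure)
  then obtain B' where B': "B' \<in> sets M" "B' \<subseteq> B" "0 < emeasure M B'" "emeasure M B' < emeasure M B"
    using na B(1) unfolding nonatomic_def by blast
  have finB': "emeasure M B' \<noteq> \<infinity>" using B' finB by (auto simp: top_unique)
  have m1: "0 < measure M B'" using B'(3) finB' by (simp add: emeasure_eq_ennreal_measure)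
  have m2: "measure M B' < measure M B" using B'(4) finB' finB
    by (simp add: emeasure_eq_ennreal_measure ennreal_less_iff)
  have md: "measure M (B - B') = measure M B - measure M B'"
    using measure_Diff[OF finB B(1) B'(1) B'(2)] .
  show ?case
  proof (cases "measure M B' \<le> measure M B / 2")
    case True
    have "measure M B / 2 \<le> measure M A / 2 ^ Suc n" using B(4) by (simp add: field_simps)
    then show ?thesis using B B' m1 True by (intro bexI[of _ B']) auto
  next
    case False
    have "measure M B / 2 \<le> measure M A / 2 ^ Suc n" using B(4) by (simp add: field_simps)
    moreover have "measure M (B - B') \<le> measure M B / 2" using md False by simp
    ultimately show ?thesis using B B' m1 m2 md by (intro bexI[of _ "B - B'"]) auto
  qed
qed

lemma small_subset:
  assumes na: "nonatomic M" and A: "A \<in> sets M" and pos: "0 < measure M A" and fin: "emeasure M A < \<infinity>"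
    and e: "0 < (e::real)"
  shows "\<exists>B\<in>sets M. B \<subseteq> A \<and> 0 < measure M B \<and> measure M B \<le> e"
proof -
  obtain n where n: "measure M A / e < 2 ^ n" using real_arch_pow[of 2 "measure M A / e"] by auto
  have "0 < emeasure M A" using pos fin by (simp add: emeasure_eq_ennreal_measure)
  then obtain B where B: "B \<in> sets M" "B \<subseteq> A" "0 < measure M B" "measure M B \<le> measure M A / 2^n"
    using halving[OF na A _ fin] by blast
  have "measure M A / 2^n \<le> e" using n e by (simp add: field_simps)
  then show ?thesis using B by auto
qed

lemma greedy:
  assumes na: "nonatomic M" and A: "A \<in> sets M" and fin: "emeasure M A < \<infinity>"
    and t: "0 \<le> t" "t \<le> measure M A"
  shows "\<exists>B\<in>sets M. B \<subseteq> A \<and> measure M B = t"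
proof -
  have finS: "emeasure M S \<noteq> \<infinity>" if "S \<subseteq> A" for S
    using emeasure_mono[OF that A] fin by (auto simp: top_unique)
  define Cands where "Cands B = {C \<in> sets M. C \<subseteq> A - B \<and> measure M C \<le> t - measure M B}" for B
  define S where "S B = Sup (measure M ` Cands B)" for B
  define step where "step B = (SOME C. C \<in> Cands B \<and> S B / 2 \<le> measure M C)" for B
  have bdd: "bdd_above (measure M ` Cands B)" for B
    unfolding Cands_def by (rule bdd_aboveI[of _ "t - measure M B"]) auto
  have step: "step B \<in> Cands B \<and> S B / 2 \<le> measure M (step B)" if "measure M B \<le> t" for B
  proof -
    have e: "{} \<in> Cands B" using that unfolding Cands_def by auto
    have S0: "0 \<le> S B" unfolding S_def using cSup_upper[OF imageI[OF e] bdd] by simp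
    have "\<exists>C. C \<in> Cands B \<and> S B / 2 \<le> measure M C"
    proof (cases "S B = 0")
      case True then show ?thesis using e by auto
    next
      case False
      then have "S B / 2 < Sup (measure M ` Cands B)" using S0 unfolding S_def by simp
      then have "\<exists>x\<in>measure M ` Cands B. S B / 2 < x"
        using less_cSup_iff[OF _ bdd] e by blast
      then obtain C where "C \<in> Cands B" "S B / 2 < measure M C" by auto
      then show ?thesis by (auto intro!: exI[of _ C])
    qed
    then show ?thesis unfolding step_def by (rule someI_ex)
  qed
  define Bs where "Bs = rec_nat {} (\<lambda>n B. B \<union> step B)"
  have Bs0: "Bs 0 = {}" and BsS: "Bs (Suc n) = Bs n \<union> step (Bs n)" for n
    unfolding Bs_def by auto
  have inv: "Bs n \<in> sets M \<and> Bs n \<subseteq> A \<and> measure M (Bs n) \<le> t" for n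
  proof (induction n)
    case 0 then show ?case using t by (simp add: Bs0)
  next
    case (Suc n)
    then have st: "step (Bs n) \<in> Cands (Bs n)" using step by blast
    then have C: "step (Bs n) \<in> sets M" "step (Bs n) \<subseteq> A - Bs n"
      "measure M (step (Bs n)) \<le> t - measure M (Bs n)" unfolding Cands_def by auto
    have "measure M (Bs n \<union> step (Bs n)) = measure M (Bs n) + measure M (step (Bs n))"
      using Suc C by (intro measure_Union finS) auto
    then show ?case using Suc C by (auto simp: BsS)
  qed
  have BsSm: "measure M (Bs (Suc n)) = measure M (Bs n) + measure M (step (Bs n))" for n
  proof -
    have st: "step (Bs n) \<in> Cands (Bs n)" using step inv by blast
    then have C: "step (Bs n) \<in> sets M" "step (Bs n) \<subseteq> A - Bs n" unfolding Cands_def by auto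
    show ?thesis unfolding BsS using inv C by (intro measure_Union finS) auto
  qed
  have inc: "incseq Bs" by (rule incseq_SucI) (auto simp: BsS)
  define B where "B = (\<Union>n. Bs n)"
  have Bsets: "B \<in> sets M" and BA: "B \<subseteq> A" unfolding B_def using inv by auto
  have lim: "(\<lambda>n. measure M (Bs n)) \<longlonglongrightarrow> measure M B"
    unfolding B_def using inv inc finS[OF BA[unfolded B_def]] by (intro Lim_measure_incseq) auto
  have BsB: "measure M (Bs n) \<le> measure M B" for n
    using inv BA Bsets finS[OF BA] unfolding B_def
    by (intro measure_mono_fmeasurable) (auto simp: fmeasurable_def less_top)
  have le: "measure M B \<le> t"
    using inv by (intro LIMSEQ_le_const2[OF lim]) auto
  have "\<not> measure M B < t"
  proof
    assume lt: "measure M B < t"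
    have "measure M (A - B) = measure M A - measure M B"
      using measure_Diff[OF finS[OF order_refl] A Bsets BA] .
    then have pos: "0 < measure M (A - B)" using lt t by simp
    obtain C where C: "C \<in> sets M" "C \<subseteq> A - B" "0 < measure M C" "measure M C \<le> t - measure M B"
      using small_subset[OF na _ pos _, of "t - measure M B"] A Bsets lt finS[of "A - B"]
      by (auto simp: less_top)
    have grow: "measure M C / 2 \<le> measure M (step (Bs n))" for n
    proof -
      have "C \<in> Cands (Bs n)" unfolding Cands_def using C BsB[of n] unfolding B_def by auto
      then have "measure M C \<le> S (Bs n)" unfolding S_def by (rule cSup_upper[OF imageI bdd])
      then show ?thesis using step[of "Bs n"] inv[of n] by auto
    qed
    have lin: "real n * (measure M C / 2) \<le> measure M (Bs n)" for n
    proof (induction n)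
      case 0 then show ?case by (simp add: Bs0)
    next
      case (Suc n) then show ?case using grow[of n] BsSm[of n] by (simp add: algebra_simps)
    qed
    obtain n where n: "t < real n * (measure M C / 2)"
      using reals_Archimedean3[of "measure M C / 2"] C(3) by auto
    then show False using lin[of n] inv[of n] by simp
  qed
  then show ?thesis using le Bsets BA by (intro bexI[of _ B]) auto
qed




lemma mult_approx:
  fixes a b c :: ennreal assumes "c < a * b" shows "\<exists>s. s < b \<and> c < a * s"
proof -
  have "Sup {..<b} = b" by (rule Sup_lessThan)
  then have "a * b = (SUP s\<in>{..<b}. a * s)" using SUP_mult_left_ennreal[of a "\<lambda>s. s" "{..<b}"] by simp
  then have "c < (SUP s\<in>{..<b}. a * s)" using assms by simp
  then obtain s where "s \<in> {..<b}" "c < a * s" unfolding less_SUP_iff by blast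
  then show ?thesis by auto
qed
lemma lvl_sets: fixes g :: "'a \<Rightarrow> ennreal"
  assumes g: "g \<in> borel_measurable M" shows "{x \<in> space M. s < g x} \<in> sets M"
proof -
  have "{x \<in> space M. s < g x} = g -` {s<..} \<inter> space M" by auto
  then show ?thesis using measurable_sets[OF g, of "{s<..}"] by simp
qed
lemma distf_anti: assumes g: "g \<in> borel_measurable M" and "s \<le> s'"
  shows "distf M g s' \<le> distf M g s"
  unfolding distf_def
proof (rule emeasure_mono)
  show "{x \<in> space M. s' < g x} \<subseteq> {x \<in> space M. s < g x}"
  proof (intro subsetI)
    fix x assume "x \<in> {x \<in> space M. s' < g x}"
    then have "x \<in> space M" "s' < g x" by auto
    then show "x \<in> {x \<in> space M. s < g x}" using le_less_trans[OF assms(2), of "g x"] by simp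
  qed
  show "{x \<in> space M. s < g x} \<in> sets M" using g by (rule lvl_sets)
qed

lemma rearr_lower: assumes "\<And>\<sigma>. \<sigma> < s \<Longrightarrow> ennreal t < distf M g \<sigma>"
  shows "s \<le> rearr M g t"
  unfolding rearr_def
proof (rule Inf_greatest)
  fix \<sigma> assume "\<sigma> \<in> {s. distf M g s \<le> ennreal t}"
  then show "s \<le> \<sigma>" using assms[of \<sigma>] by (metis mem_Collect_eq not_le)
qed

lemma rearr_upper: "distf M g s \<le> ennreal t \<Longrightarrow> rearr M g t \<le> s"
  unfolding rearr_def by (rule Inf_lower) simp

lemma rearr_gt: "s < rearr M g t \<Longrightarrow> ennreal t < distf M g s"
  using rearr_upper[of M g s t] by (meson not_le)

lemma rearr_lt: assumes g: "g \<in> borel_measurable M" and "rearr M g t < s"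
  shows "distf M g s \<le> ennreal t"
proof -
  obtain \<sigma> where "\<sigma> < s" "distf M g \<sigma> \<le> ennreal t"
    using assms(2) unfolding rearr_def by (auto simp: Inf_less_iff)
  then show ?thesis using distf_anti[OF g, of \<sigma> s] by (meson order.strict_implies_order order.trans)
qed

lemma distf_mono_g: assumes h: "h \<in> borel_measurable M" and le: "\<And>x. x \<in> space M \<Longrightarrow> g x \<le> h x"
  shows "distf M g s \<le> distf M h s"
  unfolding distf_def
proof (rule emeasure_mono)
  show "{x \<in> space M. s < g x} \<subseteq> {x \<in> space M. s < h x}"
  proof (intro subsetI)
    fix x assume "x \<in> {x \<in> space M. s < g x}"
    then have "x \<in> space M" "s < g x" by auto
    then show "x \<in> {x \<in> space M. s < h x}" using less_le_trans[of s "g x" "h x"] le[of x] by simp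
  qed
  show "{x \<in> space M. s < h x} \<in> sets M" using h by (rule lvl_sets)
qed

lemma rearr_mono_g: assumes h: "h \<in> borel_measurable M" and le: "\<And>x. x \<in> space M \<Longrightarrow> g x \<le> h x"
  shows "rearr M g t \<le> rearr M h t"
  unfolding rearr_def
proof (intro Inf_superset_mono subsetI)
  fix \<sigma> assume "\<sigma> \<in> {s. distf M h s \<le> ennreal t}"
  then show "\<sigma> \<in> {s. distf M g s \<le> ennreal t}" using distf_mono_g[OF assms, of \<sigma>] by simp
qed

lemma rearr_anti_t: assumes "t \<le> t'" shows "rearr M g t' \<le> rearr M g t"
  unfolding rearr_def
proof (intro Inf_superset_mono subsetI)
  fix \<sigma> assume "\<sigma> \<in> {s. distf M g s \<le> ennreal t}"
  then show "\<sigma> \<in> {s. distf M g s \<le> ennreal t'}" using ennreal_leI[OF assms] by simp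
qed

lemma marc_ge: "0 \<le> t \<Longrightarrow> fundf M N t * rearr M g t \<le> marc M N g"
  unfolding marc_def by (rule SUP_upper) auto

lemma marc_le: "(\<And>t. 0 \<le> t \<Longrightarrow> fundf M N t * rearr M g t \<le> B) \<Longrightarrow> marc M N g \<le> B"
  unfolding marc_def by (rule SUP_least) auto

lemma modf_meas: "f \<in> borel_measurable M \<Longrightarrow> modf f \<in> borel_measurable M"
  unfolding modf_def by measurable




locale ctx =
  fixes M :: "'a measure" and N :: "('a \<Rightarrow> ennreal) \<Rightarrow> ennreal"
  assumes sf: "sigma_finite_measure M"
    and na: "nonatomic M"
    and inf: "emeasure M (space M) = \<infinity>"
    and q: "qbfn M N" and ri: "rinv M N"
begin

lemma sierp:
  assumes A: "A \<in> sets M" and t: "0 \<le> t" "ennreal t \<le> emeasure M A"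
  shows "\<exists>B\<in>sets M. B \<subseteq> A \<and> emeasure M B = ennreal t"
proof -
  have fincase: "\<exists>B\<in>sets M. B \<subseteq> A' \<and> emeasure M B = ennreal t"
    if A': "A' \<in> sets M" "ennreal t \<le> emeasure M A'" "emeasure M A' < \<infinity>" for A'
  proof -
    have "t \<le> measure M A'" using A' t by (simp add: emeasure_eq_ennreal_measure ennreal_le_iff)
    then obtain B where B: "B \<in> sets M" "B \<subseteq> A'" "measure M B = t" using greedy[OF na A'(1) A'(3) t(1)] by blast
    have "emeasure M B \<noteq> \<infinity>" using emeasure_mono[OF B(2) A'(1)] A'(3) by (auto simp: top_unique)
    then show ?thesis using B by (intro bexI[of _ B]) (auto simp: emeasure_eq_ennreal_measure)
  qed
  show ?thesis
  proof (cases "emeasure M A < \<infinity>")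
    case True then show ?thesis using fincase[OF A t(2)] by blast
  next
    case False
    obtain F where F: "range F \<subseteq> sets M" "\<Union> (range F) = space M" "\<And>i. emeasure M (F i) \<noteq> \<infinity>" "incseq F"
      using sigma_finite_measure.sigma_finite_incseq[OF sf] by metis
    have AF: "(\<Union>i. A \<inter> F i) = A" using F(2) sets.sets_into_space[OF A] by auto
    have "(SUP i. emeasure M (A \<inter> F i)) = emeasure M (\<Union>i. A \<inter> F i)"
    proof (intro SUP_emeasure_incseq)
      show "range (\<lambda>i. A \<inter> F i) \<subseteq> sets M" using F(1) A by auto
      show "incseq (\<lambda>i. A \<inter> F i)" using F(4) unfolding incseq_def by blast
    qed
    also have "\<dots> = emeasure M A" using AF by simp
    also have "\<dots> = \<infinity>" using False by (simp add: not_less top_unique)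
    finally have SI: "(SUP i. emeasure M (A \<inter> F i)) = \<infinity>" .
    have "ennreal t < (SUP i. emeasure M (A \<inter> F i))" unfolding SI by simp
    then obtain i where i: "ennreal t < emeasure M (A \<inter> F i)" unfolding less_SUP_iff by blast
    have AFi: "A \<inter> F i \<in> sets M" using A F(1) by auto
    have le1: "emeasure M (A \<inter> F i) \<le> emeasure M (F i)" using F(1) by (intro emeasure_mono) auto
    have "emeasure M (F i) < \<infinity>" using F(3)[of i] by (simp add: less_top)
    then have "emeasure M (A \<inter> F i) < \<infinity>" using le1 by (rule le_less_trans[rotated])
    then obtain B where "B\<in>sets M" "B \<subseteq> A \<inter> F i" "emeasure M B = ennreal t"
      using fincase[OF AFi order.strict_implies_order[OF i]] by blast
    then show ?thesis by blast
  qed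
qed

lemma N_hom: "f \<in> borel_measurable M \<Longrightarrow> 0 \<le> a \<Longrightarrow> N (\<lambda>x. ennreal a * f x) = ennreal a * N f"
  using q[unfolded qbfn_def, THEN conjunct1] by blast
lemma N_zero: "f \<in> borel_measurable M \<Longrightarrow> N f = 0 \<longleftrightarrow> (AE x in M. f x = 0)"
  using q[unfolded qbfn_def, THEN conjunct2, THEN conjunct1] by blast
lemma N_mono: "f \<in> borel_measurable M \<Longrightarrow> g \<in> borel_measurable M \<Longrightarrow> (AE x in M. f x \<le> g x) \<Longrightarrow> N f \<le> N g"
  using q[unfolded qbfn_def, THEN conjunct2, THEN conjunct2, THEN conjunct2, THEN conjunct1] by blast
lemma N_fin: "E \<in> sets M \<Longrightarrow> emeasure M E < \<infinity> \<Longrightarrow> N (indicator E) < \<infinity>"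
  using q[unfolded qbfn_def, THEN conjunct2, THEN conjunct2, THEN conjunct2, THEN conjunct2, THEN conjunct2] by blast

definition "Cq = (SOME C::real. C \<ge> 1 \<and> (\<forall>f\<in>borel_measurable M. \<forall>g\<in>borel_measurable M.
        N (\<lambda>x. f x + g x) \<le> ennreal C * (N f + N g)))"

lemma Cq: "Cq \<ge> 1" "\<And>f g. f \<in> borel_measurable M \<Longrightarrow> g \<in> borel_measurable M \<Longrightarrow>
        N (\<lambda>x. f x + g x) \<le> ennreal Cq * (N f + N g)"
proof -
  have "\<exists>C::real. C \<ge> 1 \<and> (\<forall>f\<in>borel_measurable M. \<forall>g\<in>borel_measurable M.
        N (\<lambda>x. f x + g x) \<le> ennreal C * (N f + N g))" using q[unfolded qbfn_def, THEN conjunct2, THEN conjunct2, THEN conjunct1] .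
  from someI_ex[OF this] show "Cq \<ge> 1" "\<And>f g. f \<in> borel_measurable M \<Longrightarrow> g \<in> borel_measurable M \<Longrightarrow>
        N (\<lambda>x. f x + g x) \<le> ennreal Cq * (N f + N g)" unfolding Cq_def by auto
qed

lemma distf_ind: "E \<in> sets M \<Longrightarrow> distf M (indicator E) s = (if s < 1 then emeasure M E else 0)"
  unfolding distf_def using sets.sets_into_space[of E M]
  by (cases "s < 1") (auto simp: indicator_def intro!: arg_cong[where f="emeasure M"] dest: leD)

lemma N_ind: assumes E: "E \<in> sets M" "emeasure M E = ennreal t" and t: "0 \<le> t"
  shows "N (indicator E) = fundf M N t"
proof -
  have ex: "\<exists>E. E \<in> sets M \<and> emeasure M E = ennreal t" using sierp[OF sets.top t] inf by auto
  define E' where "E' = (SOME E. E \<in> sets M \<and> emeasure M E = ennreal t)"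
  have E': "E' \<in> sets M" "emeasure M E' = ennreal t" using someI_ex[OF ex] unfolding E'_def by auto
  have "distf M (indicator E) = distf M (indicator E')" using E E' by (auto simp: distf_ind)
  then have "N (indicator E) = N (indicator E')"
    using ri E E' unfolding rinv_def rearr_def by (metis borel_measurable_indicator)
  then show ?thesis unfolding fundf_def E'_def .
qed

end



lemma l1: fixes x :: ennreal and C :: real assumes "1 \<le> C" shows "ennreal C * (x + x) = ennreal (2*C) * x"
proof -
  have "ennreal (2*C) = ennreal 2 * ennreal C" using assms by (intro ennreal_mult) auto
  then have "ennreal (2*C) * x = 2 * (ennreal C * x)" by (simp only: mult.assoc ennreal_numeral)
  also have "\<dots> = ennreal C * x + ennreal C * x" by (rule mult_2)
  also have "\<dots> = ennreal C * (x + x)" by (rule distrib_left[symmetric])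
  finally show ?thesis by (rule sym)
qed
lemma l2: fixes e C :: real assumes "0 < C" "0 \<le> e" shows "ennreal (2*C) * ennreal (e / (2*C)) = ennreal e"
proof -
  have "ennreal (2*C) * ennreal (e / (2*C)) = ennreal (2*C * (e / (2*C)))" using assms by (intro ennreal_mult[symmetric]) auto
  also have "2*C * (e / (2*C)) = e" using assms by simp
  finally show ?thesis .
qed

context ctx begin

lemma ex_set: "0 \<le> t \<Longrightarrow> \<exists>E\<in>sets M. emeasure M E = ennreal t"
  using sierp[OF sets.top, of t] inf by auto

lemma ind_meas: "E \<in> sets M \<Longrightarrow> (indicator E :: 'a \<Rightarrow> ennreal) \<in> borel_measurable M"
  by (rule borel_measurable_indicator)

lemma phi0: "fundf M N 0 = 0"
proof -
  have "N (indicator {}) = fundf M N 0" by (rule N_ind) auto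
  moreover have "N (indicator {}) = 0" using N_zero[of "indicator {}"] by simp
  ultimately show ?thesis by simp
qed

lemma phi_fin: assumes "0 \<le> t" shows "fundf M N t < \<infinity>"
proof -
  obtain E where E: "E \<in> sets M" "emeasure M E = ennreal t" using ex_set[OF assms] by blast
  have "N (indicator E) < \<infinity>" using N_fin[OF E(1)] E(2) by simp
  then show ?thesis using N_ind[OF E assms] by simp
qed

lemma phi_pos: assumes "0 < t" shows "0 < fundf M N t"
proof (rule ccontr)
  assume "\<not> 0 < fundf M N t"
  then have z: "fundf M N t = 0" by (simp add: not_less)
  obtain E where E: "E \<in> sets M" "emeasure M E = ennreal t" using ex_set[of t] assms by auto
  have "N (indicator E) = 0" using N_ind[OF E] assms z by simp
  then have "AE x in M. (indicator E x :: ennreal) = 0" using N_zero[OF ind_meas[OF E(1)]] by simp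
  then have "AE x in M. x \<notin> E" by (rule AE_mp) (auto simp: indicator_def)
  then have "E \<in> null_sets M" using AE_iff_null_sets[OF E(1)] by simp
  then have "emeasure M E = 0" by auto
  then show False using E(2) assms by simp
qed

lemma phi_mono: assumes "0 \<le> s" "s \<le> t" shows "fundf M N s \<le> fundf M N t"
proof -
  obtain E where E: "E \<in> sets M" "emeasure M E = ennreal t" using ex_set[of t] assms by auto
  obtain F where F: "F \<in> sets M" "F \<subseteq> E" "emeasure M F = ennreal s"
    using sierp[OF E(1) assms(1)] E(2) assms by auto
  have "N (indicator F) \<le> N (indicator E)"
    using F(2) by (intro N_mono ind_meas F(1) E(1) AE_I2) (auto simp: indicator_def)
  then show ?thesis using N_ind[OF F(1,3) assms(1)] N_ind[OF E] assms by simp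
qed

lemma phi_dbl: assumes t: "0 \<le> t" shows "fundf M N (2*t) \<le> ennreal (2*Cq) * fundf M N t"
proof -
  obtain E where E: "E \<in> sets M" "emeasure M E = ennreal (2*t)" using ex_set[of "2*t"] assms by auto
  obtain A where A: "A \<in> sets M" "A \<subseteq> E" "emeasure M A = ennreal t"
    using sierp[OF E(1) t] E(2) t by auto
  have "emeasure M (E - A) = emeasure M E - emeasure M A" using A E by (intro emeasure_Diff) auto
  also have "\<dots> = ennreal t" using E(2) A(3) t by (simp add: ennreal_minus)
  finally have EA: "emeasure M (E - A) = ennreal t" .
  have EAs: "E - A \<in> sets M" using E A by auto
  have ind: "(indicator E :: 'a \<Rightarrow> ennreal) = (\<lambda>x. indicator A x + indicator (E - A) x)"
  proof
    fix x show "(indicator E x :: ennreal) = indicator A x + indicator (E - A) x"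
      using A(2) by (cases "x \<in> A"; cases "x \<in> E") auto
  qed
  have "fundf M N (2*t) = N (indicator E)" using N_ind[OF E] t by simp
  also have "\<dots> \<le> ennreal Cq * (N (indicator A) + N (indicator (E - A)))"
    unfolding ind by (intro Cq(2) ind_meas A(1) EAs)
  also have "\<dots> = ennreal Cq * (fundf M N t + fundf M N t)"
    using N_ind[OF A(1,3) t] N_ind[OF EAs EA t] by simp
  also have "\<dots> = ennreal (2*Cq) * fundf M N t"
    using Cq(1) by (rule l1)
  finally show ?thesis .
qed

lemma contra:
  assumes lt: "ennreal e < fundf M N t * s" and t: "0 < t"
    and le: "fundf M N (t/2) * s \<le> m" and m: "m < ennreal (e / (2*Cq))" and e: "0 \<le> e"
  shows False
proof -
  have C0: "0 < Cq" using Cq(1) by simp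
  have A: "fundf M N t \<le> ennreal (2*Cq) * fundf M N (t/2)" using phi_dbl[of "t/2"] t by simp
  have "fundf M N t * s \<le> (ennreal (2*Cq) * fundf M N (t/2)) * s" by (rule mult_right_mono[OF A]) simp
  also have "\<dots> = ennreal (2*Cq) * (fundf M N (t/2) * s)" by (rule mult.assoc)
  also have "\<dots> \<le> ennreal (2*Cq) * m" by (rule mult_left_mono[OF le]) simp
  also have "\<dots> \<le> ennreal (2*Cq) * ennreal (e / (2*Cq))" by (rule mult_left_mono[OF less_imp_le[OF m]]) simp
  also have "\<dots> = ennreal e" using C0 e by (rule l2)
  finally show False using lt by simp
qed

end



lemma ennreal_pos_real:
  fixes a :: ennreal assumes "0 < a" obtains e where "0 < e" "ennreal e < a"
proof -
  obtain d where d: "0 < d" "d < a" using dense[OF assms] by blast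
  have dt: "d < top" using d(2) top_greatest[of a] by (rule less_le_trans)
  have "0 < enn2real d" using d(1) dt by (simp add: enn2real_positive_iff)
  moreover have "ennreal (enn2real d) < a" using dt d(2) by simp
  ultimately show ?thesis using that by blast
qed

lemma ennreal_tendsto0I:
  fixes F :: "'b \<Rightarrow> ennreal"
  assumes "\<And>e. 0 < e \<Longrightarrow> eventually (\<lambda>k. F k \<le> ennreal e) L"
  shows "(F \<longlongrightarrow> 0) L"
proof (rule order_tendstoI)
  fix a :: ennreal assume "a < 0" then show "eventually (\<lambda>k. a < F k) L" by simp
next
  fix a :: ennreal assume "0 < a"
  then obtain e where e: "0 < e" "ennreal e < a" by (rule ennreal_pos_real)
  show "eventually (\<lambda>k. F k < a) L"
    by (rule eventually_mono[OF assms[OF e(1)]]) (erule le_less_trans[OF _ e(2)])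
qed

context ctx begin

lemma partA:
  assumes f: "f \<in> fspace M (marc M N)"
    and l0: "((\<lambda>t. fundf M N t * rearr M (modf f) t) \<longlongrightarrow> 0) (at_right 0)"
    and linf: "((\<lambda>t. fundf M N t * rearr M (modf f) t) \<longlongrightarrow> 0) at_top"
  shows "f \<in> acpart M (marc M N)"
  unfolding acpart_def
proof (intro CollectI conjI allI impI f)
  fix E :: "nat \<Rightarrow> 'a set"
  assume Es: "\<forall>k. E k \<in> sets M" and AEc: "AE x in M. (\<lambda>k. indicator (E k) x :: real) \<longlonglongrightarrow> 0"
  define g where "g = modf f"
  have gm: "g \<in> borel_measurable M" using f unfolding g_def fspace_def by (auto intro: modf_meas)
  define F where "F t = fundf M N t * rearr M g t" for t
  show "(\<lambda>k. marc M N (\<lambda>x. modf f x * indicator (E k) x)) \<longlonglongrightarrow> 0"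
    unfolding g_def[symmetric]
  proof (rule ennreal_tendsto0I)
    fix \<epsilon> :: real assume \<epsilon>: "0 < \<epsilon>"
    have "eventually (\<lambda>t. F t < ennreal \<epsilon>) (at_right 0)"
      using order_tendstoD(2)[OF l0] \<epsilon> unfolding F_def g_def by simp
    then obtain \<delta> where \<delta>: "0 < \<delta>" "\<And>t. 0 < t \<Longrightarrow> t < \<delta> \<Longrightarrow> F t < ennreal \<epsilon>"
      unfolding eventually_at_right_field by auto
    have "eventually (\<lambda>t. F t < ennreal \<epsilon>) at_top"
      using order_tendstoD(2)[OF linf] \<epsilon> unfolding F_def g_def by simp
    then obtain T where T: "\<And>t. T \<le> t \<Longrightarrow> F t < ennreal \<epsilon>"
      unfolding eventually_at_top_linorder by auto
    define Tb where "Tb = max T (max \<delta> 1)"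
    have Tb: "T \<le> Tb" "\<delta> \<le> Tb" "1 \<le> Tb" unfolding Tb_def by auto
    define p where "p = enn2real (fundf M N Tb)"
    have p: "fundf M N Tb = ennreal p" "0 \<le> p" unfolding p_def using phi_fin[of Tb] Tb by auto
    define s where "s = \<epsilon> / (p + 1)"
    have s: "0 < s" unfolding s_def using \<epsilon> p by simp
    have "p * s \<le> \<epsilon>" unfolding s_def using \<epsilon> p by (simp add: field_simps)
    then have "ennreal (p * s) \<le> ennreal \<epsilon>" by (rule ennreal_leI)
    then have ps: "fundf M N Tb * ennreal s \<le> ennreal \<epsilon>"
      unfolding p(1) using ennreal_mult[of p s] p(2) s by simp
    have phi1: "0 < fundf M N 1" by (rule phi_pos) simp
    have pos1: "0 < fundf M N 1 * ennreal s" using phi1 s by (simp add: ennreal_zero_less_mult_iff)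
    have "eventually (\<lambda>t. F t < fundf M N 1 * ennreal s) at_top"
      using order_tendstoD(2)[OF linf pos1] unfolding F_def g_def .
    then obtain T2 where T2: "\<And>t. T2 \<le> t \<Longrightarrow> F t < fundf M N 1 * ennreal s"
      unfolding eventually_at_top_linorder by auto
    define t0 where "t0 = max T2 1"
    have t0: "T2 \<le> t0" "1 \<le> t0" "0 \<le> t0" unfolding t0_def by auto
    have "rearr M g t0 < ennreal s"
    proof (rule ccontr)
      assume "\<not> rearr M g t0 < ennreal s"
      then have "ennreal s \<le> rearr M g t0" by simp
      then have "fundf M N 1 * ennreal s \<le> fundf M N 1 * rearr M g t0" by (rule mult_left_mono) simp
      also have "\<dots> \<le> fundf M N t0 * rearr M g t0" by (rule mult_right_mono[OF phi_mono]) (use t0 in auto)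
      also have "\<dots> < fundf M N 1 * ennreal s" using T2[OF t0(1)] unfolding F_def .
      finally show False by simp
    qed
    then have dL: "distf M g (ennreal s) \<le> ennreal t0" by (rule rearr_lt[OF gm])
    define L where "L = {x \<in> space M. ennreal s < g x}"
    have Ls: "L \<in> sets M" unfolding L_def using gm by (rule lvl_sets)
    have "emeasure M L < top" using dL unfolding distf_def L_def[symmetric]
      using ennreal_less_top[of t0] by (rule le_less_trans)
    then have Lfin: "emeasure M L < \<infinity>" by simp
    have LEk: "L \<inter> E k \<in> sets M" for k using Ls Es by auto
    have LEfin: "emeasure M (L \<inter> E k) < \<infinity>" for k
      using le_less_trans[OF emeasure_mono[OF Int_lower1 Ls] Lfin] .
    have lim: "(\<lambda>k. integral\<^sup>L M (indicator (L \<inter> E k) :: 'a \<Rightarrow> real)) \<longlonglongrightarrow> integral\<^sup>L M (\<lambda>x. 0 :: real)"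
    proof (rule integral_dominated_convergence[where w="indicator L"])
      show "(\<lambda>x. 0::real) \<in> borel_measurable M" by simp
      show "(indicator (L \<inter> E k) :: 'a \<Rightarrow> real) \<in> borel_measurable M" for k
        using LEk[of k] by (rule borel_measurable_indicator)
      show "integrable M (indicator L :: 'a \<Rightarrow> real)"
        unfolding integrable_indicator_iff using Ls Lfin sets.sets_into_space[OF Ls]
        by (simp add: Int_absorb2)
      show "AE x in M. (\<lambda>k. indicator (L \<inter> E k) x :: real) \<longlonglongrightarrow> 0"
        using AEc
      proof (rule AE_mp, intro AE_I2 impI)
        fix x assume "(\<lambda>k. indicator (E k) x :: real) \<longlonglongrightarrow> 0"
        then have "(\<lambda>k. indicator L x * indicator (E k) x :: real) \<longlonglongrightarrow> indicator L x * 0"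
          by (intro tendsto_mult tendsto_const)
        then show "(\<lambda>k. indicator (L \<inter> E k) x :: real) \<longlonglongrightarrow> 0"
          by (simp add: indicator_inter_arith)
      qed
      show "AE x in M. norm (indicator (L \<inter> E k) x :: real) \<le> indicator L x" for k
        by (intro AE_I2) (auto simp: indicator_def)
    qed
    have "(\<lambda>k. measure M (L \<inter> E k)) \<longlonglongrightarrow> 0"
    proof -
      have "integral\<^sup>L M (indicator (L \<inter> E k) :: 'a \<Rightarrow> real) = measure M (L \<inter> E k)" for k
        using sets.sets_into_space[OF LEk[of k]] by (simp add: Int_absorb2)
      then show ?thesis using lim by simp
    qed
    then have ev: "eventually (\<lambda>k. measure M (L \<inter> E k) < \<delta>) sequentially"
      using \<delta>(1) by (rule order_tendstoD(2))
    show "eventually (\<lambda>k. marc M N (\<lambda>x. g x * indicator (E k) x) \<le> ennreal \<epsilon>) sequentially"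
      using ev
    proof (rule eventually_mono)
      fix k assume mk: "measure M (L \<inter> E k) < \<delta>"
      define h where "h x = g x * indicator (E k) x" for x
      have hg: "h x \<le> g x" for x unfolding h_def by (auto simp: indicator_def)
      have dh: "distf M h (ennreal s) = emeasure M (L \<inter> E k)"
        unfolding distf_def L_def h_def
        by (intro arg_cong[where f="emeasure M"]) (auto simp: indicator_def)
      also have "\<dots> = ennreal (measure M (L \<inter> E k))"
        using LEfin[of k] by (simp add: emeasure_eq_ennreal_measure less_top)
      also have "\<dots> \<le> ennreal \<delta>" using mk by (intro ennreal_leI) simp
      finally have hd: "rearr M h \<delta> \<le> ennreal s" by (rule rearr_upper)
      have "marc M N h \<le> ennreal \<epsilon>"
      proof (rule marc_le)
        fix t :: real assume t: "0 \<le> t"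
        have hF: "fundf M N t * rearr M h t \<le> F t"
          unfolding F_def by (rule mult_left_mono[OF rearr_mono_g[OF gm hg]]) simp
        consider "t = 0" | "0 < t" "t < \<delta>" | "Tb \<le> t" | "\<delta> \<le> t" "t < Tb" using t by linarith
        then show "fundf M N t * rearr M h t \<le> ennreal \<epsilon>"
        proof cases
          case 1 then show ?thesis by (simp add: phi0)
        next
          case 2 then show ?thesis using hF \<delta>(2)[of t] by simp
        next
          case 3 then show ?thesis using hF T[of t] Tb by simp
        next
          case 4
          have "fundf M N t * rearr M h t \<le> fundf M N Tb * ennreal s"
          proof (rule mult_mono)
            show "fundf M N t \<le> fundf M N Tb" using 4 t by (intro phi_mono) auto
            show "rearr M h t \<le> ennreal s" using rearr_anti_t[of \<delta> t M h] 4 hd by simp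
          qed auto
          then show ?thesis using ps by simp
        qed
      qed
      then show "marc M N (\<lambda>x. g x * indicator (E k) x) \<le> ennreal \<epsilon>" unfolding h_def .
    qed
  qed
qed

end



context ctx begin

lemma hmeas: "g \<in> borel_measurable M \<Longrightarrow> E \<in> sets M \<Longrightarrow> (\<lambda>x. g x * indicator E x :: ennreal) \<in> borel_measurable M"
  by (intro borel_measurable_times_ennreal borel_measurable_indicator)

lemma acp_use:
  assumes f: "f \<in> acpart M (marc M N)" and Es: "\<And>k. E k \<in> sets M"
    and AEc: "AE x in M. (\<lambda>k. indicator (E k) x :: real) \<longlonglongrightarrow> 0"
  shows "(\<lambda>k. marc M N (\<lambda>x. modf f x * indicator (E k) x)) \<longlonglongrightarrow> 0"
  using f Es AEc unfolding acpart_def by blast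

lemma partB0:
  assumes f: "f \<in> acpart M (marc M N)"
  shows "((\<lambda>t. fundf M N t * rearr M (modf f) t) \<longlongrightarrow> 0) (at_right 0)"
proof -
  define g where "g = modf f"
  have gm: "g \<in> borel_measurable M" using f unfolding g_def acpart_def fspace_def by (auto intro: modf_meas)
  define G where "G t = fundf M N t * rearr M g t" for t
  have "(G \<longlongrightarrow> 0) (at_right 0)"
  proof (rule order_tendstoI)
    fix a :: ennreal assume "a < 0" then show "eventually (\<lambda>k. a < G k) (at_right 0)" by simp
  next
    fix a :: ennreal assume a: "0 < a"
    then obtain e where e: "0 < e" "ennreal e < a" by (rule ennreal_pos_real)
    show "eventually (\<lambda>t. G t < a) (at_right 0)"
    proof (rule ccontr)
      assume "\<not> eventually (\<lambda>t. G t < a) (at_right 0)"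
      then have "\<forall>b>0. \<exists>y>0. y < b \<and> \<not> G y < a" unfolding eventually_at_right_field by auto
      then have "\<forall>n. \<exists>y. 0 < y \<and> y < (1/2)^n \<and> a \<le> G y" by (auto simp: not_less)
      then obtain tt where tt: "\<And>n. 0 < tt n" "\<And>n. tt n < (1/2)^n" "\<And>n. a \<le> G (tt n)" by metis
      have "\<forall>n. \<exists>\<sigma>. \<sigma> < rearr M g (tt n) \<and> ennreal e < fundf M N (tt n) * \<sigma>"
      proof
        fix n
        have "ennreal e < fundf M N (tt n) * rearr M g (tt n)" using e(2) tt(3)[of n] unfolding G_def
          by (rule less_le_trans)
        then show "\<exists>\<sigma>. \<sigma> < rearr M g (tt n) \<and> ennreal e < fundf M N (tt n) * \<sigma>" by (rule mult_approx)
      qed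
      then obtain ss where ss: "\<And>n. ss n < rearr M g (tt n)" "\<And>n. ennreal e < fundf M N (tt n) * ss n" by metis
      have exF: "\<exists>B\<in>sets M. B \<subseteq> {x \<in> space M. ss n < g x} \<and> emeasure M B = ennreal (tt n)" for n
      proof (rule sierp)
        show "{x \<in> space M. ss n < g x} \<in> sets M" using gm by (rule lvl_sets)
        show "0 \<le> tt n" using tt(1)[of n] by simp
        show "ennreal (tt n) \<le> emeasure M {x \<in> space M. ss n < g x}"
          using rearr_gt[OF ss(1)[of n]] unfolding distf_def by simp
      qed
      define F where "F n = (SOME B. B \<in> sets M \<and> B \<subseteq> {x \<in> space M. ss n < g x} \<and> emeasure M B = ennreal (tt n))" for n
      have F: "F n \<in> sets M" "F n \<subseteq> {x \<in> space M. ss n < g x}" "emeasure M (F n) = ennreal (tt n)" for n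
        using someI_ex[OF exF[of n, unfolded Bex_def]] unfolding F_def by auto
      have mF: "measure M (F n) = tt n" for n using F(3)[of n] tt(1)[of n] unfolding measure_def by simp
      have "AE x in M. eventually (\<lambda>n. x \<in> space M - F n) sequentially"
      proof (rule borel_cantelli_AE1)
        show "F n \<in> sets M" for n by (rule F(1))
        show "emeasure M (F n) < \<infinity>" for n using F(3)[of n] by simp
        show "summable (\<lambda>n. measure M (F n))" unfolding mF
        proof (rule summable_comparison_test)
          have "norm (tt n) \<le> (1/2)^n" for n using tt(1)[of n] tt(2)[of n] by simp
          then show "\<exists>N. \<forall>n\<ge>N. norm (tt n) \<le> (1/2)^n" by blast
          show "summable (\<lambda>n. (1/2::real)^n)" by (rule summable_geometric) simp
        qed
      qed
      then have AEc: "AE x in M. (\<lambda>n. indicator (F n) x :: real) \<longlonglongrightarrow> 0"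
      proof (rule AE_mp, intro AE_I2 impI)
        fix x assume "eventually (\<lambda>n. x \<in> space M - F n) sequentially"
        then have "eventually (\<lambda>n. (indicator (F n) x :: real) = 0) sequentially"
          by (rule eventually_mono) (auto simp: indicator_def)
        then show "(\<lambda>n. indicator (F n) x :: real) \<longlonglongrightarrow> 0" by (rule tendsto_eventually)
      qed
      have lim: "(\<lambda>n. marc M N (\<lambda>x. g x * indicator (F n) x)) \<longlonglongrightarrow> 0"
        unfolding g_def by (rule acp_use[OF f F(1) AEc])
      have C0: "0 < Cq" using Cq(1) by simp
      have "eventually (\<lambda>n. marc M N (\<lambda>x. g x * indicator (F n) x) < ennreal (e / (2*Cq))) sequentially"
        using e(1) C0 by (intro order_tendstoD(2)[OF lim]) simp
      then obtain n where n: "marc M N (\<lambda>x. g x * indicator (F n) x) < ennreal (e / (2*Cq))"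
        unfolding eventually_sequentially by blast
      define h where "h x = g x * indicator (F n) x" for x
      have hm: "h \<in> borel_measurable M" unfolding h_def using gm F(1) by (rule hmeas)
      have "ss n \<le> rearr M h (tt n / 2)"
      proof (rule rearr_lower)
        fix \<sigma> assume \<sigma>: "\<sigma> < ss n"
        have "F n \<subseteq> {x \<in> space M. \<sigma> < h x}"
        proof
          fix x assume x: "x \<in> F n"
          then have "x \<in> space M" "ss n < g x" using F(2)[of n] by auto
          moreover have "h x = g x" unfolding h_def using x by simp
          ultimately show "x \<in> {x \<in> space M. \<sigma> < h x}" using \<sigma> by simp
        qed
        then have "emeasure M (F n) \<le> distf M h \<sigma>" unfolding distf_def
          using hm by (intro emeasure_mono lvl_sets)
        moreover have "ennreal (tt n / 2) < ennreal (tt n)" using tt(1)[of n] by (simp add: ennreal_lessI)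
        ultimately show "ennreal (tt n / 2) < distf M h \<sigma>" using F(3)[of n] by simp
      qed
      then have "fundf M N (tt n / 2) * ss n \<le> fundf M N (tt n / 2) * rearr M h (tt n / 2)"
        by (rule mult_left_mono) simp
      also have "\<dots> \<le> marc M N h" using tt(1)[of n] by (intro marc_ge) simp
      finally have le: "fundf M N (tt n / 2) * ss n \<le> marc M N h" .
      show False using contra[OF ss(2)[of n] tt(1)[of n] le] n e(1) unfolding h_def by simp
    qed
  qed
  then show ?thesis unfolding G_def g_def .
qed

end



context ctx begin

lemma partBinf:
  assumes f: "f \<in> acpart M (marc M N)"
  shows "((\<lambda>t. fundf M N t * rearr M (modf f) t) \<longlongrightarrow> 0) at_top"
proof -
  define g where "g = modf f"
  have gm: "g \<in> borel_measurable M" using f unfolding g_def acpart_def fspace_def by (auto intro: modf_meas)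
  define G where "G t = fundf M N t * rearr M g t" for t
  obtain Fx where Fx: "range Fx \<subseteq> sets M" "\<Union> (range Fx) = space M" "\<And>i. emeasure M (Fx i) \<noteq> \<infinity>" "incseq Fx"
    using sigma_finite_measure.sigma_finite_incseq[OF sf] by metis
  define E where "E k = space M - Fx k" for k
  have Es: "E k \<in> sets M" for k unfolding E_def using Fx(1) by auto
  have AEc: "AE x in M. (\<lambda>k. indicator (E k) x :: real) \<longlonglongrightarrow> 0"
  proof (rule AE_I2)
    fix x assume x: "x \<in> space M"
    then obtain i where i: "x \<in> Fx i" using Fx(2) by auto
    have "eventually (\<lambda>k. (indicator (E k) x :: real) = 0) sequentially"
      unfolding eventually_sequentially
    proof (intro exI[of _ i] allI impI)
      fix k assume "i \<le> k"
      then have "x \<in> Fx k" using Fx(4) i unfolding incseq_def by blast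
      then show "(indicator (E k) x :: real) = 0" unfolding E_def by simp
    qed
    then show "(\<lambda>k. indicator (E k) x :: real) \<longlonglongrightarrow> 0" by (rule tendsto_eventually)
  qed
  have lim: "(\<lambda>k. marc M N (\<lambda>x. g x * indicator (E k) x)) \<longlonglongrightarrow> 0"
    unfolding g_def by (rule acp_use[OF f Es AEc])
  have "(G \<longlongrightarrow> 0) at_top"
  proof (rule order_tendstoI)
    fix a :: ennreal assume "a < 0" then show "eventually (\<lambda>k. a < G k) at_top" by simp
  next
    fix a :: ennreal assume a: "0 < a"
    then obtain e where e: "0 < e" "ennreal e < a" by (rule ennreal_pos_real)
    show "eventually (\<lambda>t. G t < a) at_top"
    proof (rule ccontr)
      assume nev: "\<not> eventually (\<lambda>t. G t < a) at_top"
      have C0: "0 < Cq" using Cq(1) by simp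
      have "eventually (\<lambda>k. marc M N (\<lambda>x. g x * indicator (E k) x) < ennreal (e / (2*Cq))) sequentially"
        using e(1) C0 by (intro order_tendstoD(2)[OF lim]) simp
      then obtain k where k: "marc M N (\<lambda>x. g x * indicator (E k) x) < ennreal (e / (2*Cq))"
        unfolding eventually_sequentially by blast
      define ar where "ar = measure M (Fx k)"
      have Fk: "Fx k \<in> sets M" using Fx(1) by auto
      have ar: "emeasure M (Fx k) = ennreal ar" "0 \<le> ar" unfolding ar_def using Fx(3)[of k]
        by (auto simp: emeasure_eq_ennreal_measure)
      obtain t where t: "max (2*ar) 1 \<le> t" "\<not> G t < a"
        using nev unfolding eventually_at_top_linorder by blast
      have tp: "0 < t" "2*ar \<le> t" using t(1) by auto
      have "ennreal e < fundf M N t * rearr M g t" using e(2) t(2) unfolding G_def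
        by (simp add: not_less less_le_trans)
      then obtain \<sigma>0 where s0: "\<sigma>0 < rearr M g t" "ennreal e < fundf M N t * \<sigma>0"
        using mult_approx by blast
      define h where "h x = g x * indicator (E k) x" for x
      have hm: "h \<in> borel_measurable M" unfolding h_def using gm Es by (rule hmeas)
      have "\<sigma>0 \<le> rearr M h (t / 2)"
      proof (rule rearr_lower)
        fix \<sigma> assume \<sigma>: "\<sigma> < \<sigma>0"
        have gt: "ennreal t < distf M g \<sigma>" using \<sigma> s0(1) by (intro rearr_gt) (rule less_trans)
        have sub: "{x \<in> space M. \<sigma> < g x} \<subseteq> {x \<in> space M. \<sigma> < h x} \<union> Fx k"
        proof
          fix x assume x: "x \<in> {x \<in> space M. \<sigma> < g x}"
          show "x \<in> {x \<in> space M. \<sigma> < h x} \<union> Fx k"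
          proof (cases "x \<in> Fx k")
            case False
            then have "h x = g x" using x unfolding h_def E_def by simp
            then show ?thesis using x by simp
          qed simp
        qed
        have "distf M g \<sigma> \<le> emeasure M ({x \<in> space M. \<sigma> < h x} \<union> Fx k)"
          unfolding distf_def using sub hm Fk by (intro emeasure_mono sets.Un lvl_sets)
        also have "\<dots> \<le> distf M h \<sigma> + ennreal ar"
          unfolding distf_def ar(1)[symmetric] using hm Fk by (intro emeasure_subadditive lvl_sets)
        finally have le: "distf M g \<sigma> \<le> distf M h \<sigma> + ennreal ar" .
        show "ennreal (t / 2) < distf M h \<sigma>"
        proof (rule ccontr)
          assume "\<not> ennreal (t / 2) < distf M h \<sigma>"
          then have "distf M h \<sigma> \<le> ennreal (t / 2)" by simp
          then have "distf M h \<sigma> + ennreal ar \<le> ennreal (t / 2) + ennreal ar" by (rule add_right_mono)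
          also have "\<dots> = ennreal (t / 2 + ar)" using tp ar(2) by (simp add: ennreal_plus)
          also have "\<dots> \<le> ennreal t" using tp by (intro ennreal_leI) simp
          finally show False using le gt by simp
        qed
      qed
      then have "fundf M N (t / 2) * \<sigma>0 \<le> fundf M N (t / 2) * rearr M h (t / 2)"
        by (rule mult_left_mono) simp
      also have "\<dots> \<le> marc M N h" using tp by (intro marc_ge) simp
      finally have le: "fundf M N (t / 2) * \<sigma>0 \<le> marc M N h" .
      show False using contra[OF s0(2) tp(1) le] k e(1) unfolding h_def by simp
    qed
  qed
  then show ?thesis unfolding G_def g_def .
qed

end



context ctx begin

lemma compl_inf: assumes G: "G \<in> sets M" "emeasure M G < \<infinity>"
  shows "emeasure M (space M - G) = \<infinity>"
proof (rule ccontr)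
  assume "emeasure M (space M - G) \<noteq> \<infinity>"
  then have a: "emeasure M (space M - G) < top" by (simp add: less_top)
  have b: "emeasure M G < top" using G(2) by simp
  have "space M = (space M - G) \<union> G" using sets.sets_into_space[OF G(1)] by auto
  then have "emeasure M (space M) \<le> emeasure M (space M - G) + emeasure M G"
    using G(1) by (metis emeasure_subadditive sets.Diff sets.top)
  also have "\<dots> < top" using a b by (simp add: ennreal_add_less_top)
  finally show False using inf by simp
qed

lemma witness: "\<exists>f\<in>fspace M (marc M N). \<not> ((\<lambda>t. fundf M N t * rearr M (modf f) t) \<longlongrightarrow> 0) at_top"
proof -
  define nxt where "nxt G n = (SOME H. H \<in> sets M \<and> H \<subseteq> space M - G \<and> emeasure M H = ennreal (2^n))" for G n
  have nxt: "nxt G n \<in> sets M \<and> nxt G n \<subseteq> space M - G \<and> emeasure M (nxt G n) = ennreal (2^n)"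
    if G: "G \<in> sets M" "emeasure M G < \<infinity>" for G n
  proof -
    have "\<exists>H\<in>sets M. H \<subseteq> space M - G \<and> emeasure M H = ennreal (2^n)"
      using G compl_inf[OF G] by (intro sierp) auto
    then have "\<exists>H. H \<in> sets M \<and> H \<subseteq> space M - G \<and> emeasure M H = ennreal (2^n)" by blast
    then show ?thesis unfolding nxt_def by (rule someI_ex)
  qed
  define G0 where "G0 = (SOME E. E \<in> sets M \<and> emeasure M E = ennreal 1)"
  have G0: "G0 \<in> sets M" "emeasure M G0 = ennreal 1"
    using someI_ex[of "\<lambda>E. E \<in> sets M \<and> emeasure M E = ennreal 1"] ex_set[of 1] unfolding G0_def by auto
  define Gs where "Gs = rec_nat G0 (\<lambda>n G. G \<union> nxt G n)"
  have Gs0: "Gs 0 = G0" and GsS: "Gs (Suc n) = Gs n \<union> nxt (Gs n) n" for n unfolding Gs_def by auto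
  have Gs: "Gs n \<in> sets M \<and> emeasure M (Gs n) = ennreal (2^n)" for n
  proof (induction n)
    case 0 then show ?case using G0 by (simp add: Gs0)
  next
    case (Suc n)
    then have fin: "emeasure M (Gs n) < \<infinity>" by simp
    note H = nxt[OF conjunct1[OF Suc] fin, of n]
    have "emeasure M (Gs n \<union> nxt (Gs n) n) = emeasure M (Gs n) + emeasure M (nxt (Gs n) n)"
      using Suc H by (intro plus_emeasure[symmetric]) auto
    also have "\<dots> = ennreal (2^n) + ennreal (2^n)" using Suc H by simp
    also have "\<dots> = ennreal (2^n + 2^n)" by (rule ennreal_plus[symmetric]) auto
    finally have em: "emeasure M (Gs n \<union> nxt (Gs n) n) = ennreal (2^Suc n)" by simp
    moreover have "Gs n \<union> nxt (Gs n) n \<in> sets M" using Suc H by (intro sets.Un) auto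
    ultimately show ?case by (simp add: GsS)
  qed
  have Gsets: "Gs n \<in> sets M" and Gm: "emeasure M (Gs n) = ennreal (2^n)" for n using Gs by auto
  have Ginc: "incseq Gs" by (rule incseq_SucI) (simp add: GsS)
  define p where "p n = enn2real (fundf M N (2^n))" for n
  have p: "fundf M N (2^n) = ennreal (p n)" "0 < p n" for n
  proof -
    have a: "fundf M N (2^n) < top" using phi_fin[of "2^n"] by simp
    have b: "0 < fundf M N (2^n)" by (rule phi_pos) simp
    show "fundf M N (2^n) = ennreal (p n)" unfolding p_def using a by simp
    show "0 < p n" unfolding p_def using a b by (simp add: enn2real_positive_iff)
  qed
  have pmono: "p m \<le> p n" if "m \<le> n" for m n
  proof -
    have "fundf M N (2^m) \<le> fundf M N (2^n)" using that by (intro phi_mono) auto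
    then show ?thesis using p[of m] p[of n] by simp
  qed
  have pdbl: "p (Suc n) \<le> 2 * Cq * p n" for n
  proof -
    have "fundf M N (2 * 2^n) \<le> ennreal (2*Cq) * fundf M N (2^n)" by (rule phi_dbl) simp
    also have "\<dots> = ennreal (2 * Cq * p n)" using p[of n] Cq(1) by (simp add: ennreal_mult)
    finally have "ennreal (p (Suc n)) \<le> ennreal (2 * Cq * p n)" using p[of "Suc n"] by simp
    then show ?thesis using p[of n] Cq(1) by (simp add: ennreal_le_iff)
  qed
  define c where "c n = 1 / p n" for n
  have cpos: "0 < c n" for n unfolding c_def using p(2)[of n] by simp
  have canti: "c n \<le> c m" if "m \<le> n" for m n
    unfolding c_def using pmono[OF that] p(2)[of m] by (simp add: frac_le)
  define w where "w x = (SUP n. ennreal (c n) * indicator (Gs n) x)" for x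
  have wm: "w \<in> borel_measurable M" unfolding w_def
    by (intro borel_measurable_SUP borel_measurable_times_ennreal borel_measurable_const borel_measurable_indicator Gsets) auto
  have wb: "w x \<le> ennreal (c 0)" for x
    unfolding w_def
  proof (rule SUP_least)
    fix n
    have "ennreal (c n) * indicator (Gs n) x \<le> ennreal (c n)" by (auto simp: indicator_def)
    also have "\<dots> \<le> ennreal (c 0)" using canti[of 0 n] by (intro ennreal_leI) simp
    finally show "ennreal (c n) * indicator (Gs n) x \<le> ennreal (c 0)" .
  qed
  have wfin: "w x < top" for x using le_less_trans[OF wb ennreal_less_top] .
  have lvl: "\<sigma> < w x \<longleftrightarrow> (\<exists>n. x \<in> Gs n \<and> \<sigma> < ennreal (c n))" for \<sigma> x
    unfolding w_def less_SUP_iff by (auto simp: indicator_def)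
  define f where "f x = complex_of_real (enn2real (w x))" for x
  have fm: "f \<in> borel_measurable M" unfolding f_def
    using measurable_compose[OF borel_measurable_enn2real[OF wm] borel_measurable_of_real] by simp
  have mf: "modf f = w" unfolding modf_def f_def
  proof
    fix x show "ennreal (cmod (complex_of_real (enn2real (w x)))) = w x" using wfin[of x] by simp
  qed
  have upper: "fundf M N t * rearr M w t \<le> 1" if t: "0 \<le> t" for t
  proof -
    have ex: "\<exists>n. t < 2^n" using real_arch_pow[of 2 t] by simp
    define n where "n = (LEAST n. t < (2::real)^n)"
    have n1: "t < 2^n" unfolding n_def by (rule LeastI_ex[OF ex])
    have n2: "2^(n-1) \<le> t" if "0 < n"
    proof -
      have "\<not> t < 2^(n-1)" unfolding n_def using that by (intro not_less_Least) (auto simp: n_def)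
      then show ?thesis by simp
    qed
    have sub: "{x \<in> space M. ennreal (c n) < w x} \<subseteq> (if n = 0 then {} else Gs (n-1))"
    proof
      fix x assume "x \<in> {x \<in> space M. ennreal (c n) < w x}"
      then obtain m where m: "x \<in> Gs m" "ennreal (c n) < ennreal (c m)" using lvl by auto
      have "m < n"
      proof (rule ccontr)
        assume "\<not> m < n" then have "c m \<le> c n" using canti by simp
        then show False using m(2) by (simp add: ennreal_less_iff not_le[symmetric] ennreal_leI)
      qed
      then have "x \<in> Gs (n-1)" using Ginc m(1) unfolding incseq_def by (metis Suc_pred' less_Suc_eq_le less_nat_zero_code neq0_conv subsetD)
      then show "x \<in> (if n = 0 then {} else Gs (n-1))" using \<open>m < n\<close> by simp
    qed
    have "distf M w (ennreal (c n)) \<le> ennreal t"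
    proof (cases "n = 0")
      case True
      then have E0: "{x \<in> space M. ennreal (c n) < w x} = {}" using sub by simp
      show ?thesis unfolding distf_def E0 by simp
    next
      case False
      have "distf M w (ennreal (c n)) \<le> emeasure M (Gs (n-1))"
        unfolding distf_def using sub False Gsets by (intro emeasure_mono) auto
      also have "\<dots> \<le> ennreal t" using Gm n2 False by (simp add: ennreal_leI)
      finally show ?thesis .
    qed
    then have r: "rearr M w t \<le> ennreal (c n)" by (rule rearr_upper)
    have ph: "fundf M N t \<le> ennreal (p n)" using phi_mono[of t "2^n"] t n1 p(1)[of n] by simp
    have "fundf M N t * rearr M w t \<le> ennreal (p n) * ennreal (c n)" using ph r by (rule mult_mono) auto
    also have "\<dots> = ennreal (p n * c n)" using p(2)[of n] cpos[of n] by (simp add: ennreal_mult)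
    also have "p n * c n = 1" unfolding c_def using p(2)[of n] by simp
    finally show ?thesis by simp
  qed
  have marcw: "marc M N w \<le> 1" by (rule marc_le) (rule upper)
  have "(1::ennreal) < top" by simp
  then have "marc M N w < top" by (rule le_less_trans[OF marcw])
  then have fsp: "f \<in> fspace M (marc M N)" unfolding fspace_def using fm by (simp add: mf)
  have lower: "ennreal (1 / (2 * Cq)) \<le> fundf M N (2^n) * rearr M w (2^n)" for n
  proof -
    have "ennreal (c (Suc n)) \<le> rearr M w (2^n)"
    proof (rule rearr_lower)
      fix \<sigma> assume \<sigma>: "\<sigma> < ennreal (c (Suc n))"
      have "Gs (Suc n) \<subseteq> {x \<in> space M. \<sigma> < w x}"
        using \<sigma> sets.sets_into_space[OF Gsets[of "Suc n"]] lvl by blast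
      then have "emeasure M (Gs (Suc n)) \<le> distf M w \<sigma>"
        unfolding distf_def using wm by (intro emeasure_mono lvl_sets)
      moreover have "ennreal (2^n) < ennreal (2^Suc n)" by (simp add: ennreal_lessI)
      ultimately show "ennreal (2^n) < distf M w \<sigma>" using Gm[of "Suc n"] by simp
    qed
    then have "ennreal (p n) * ennreal (c (Suc n)) \<le> fundf M N (2^n) * rearr M w (2^n)"
      using p(1)[of n] by (simp add: mult_left_mono)
    moreover have "ennreal (p n) * ennreal (c (Suc n)) = ennreal (p n / p (Suc n))"
      using p(2)[of n] cpos[of "Suc n"] unfolding c_def by (simp add: ennreal_mult[symmetric])
    moreover have "1 / (2 * Cq) \<le> p n / p (Suc n)"
      using pdbl[of n] p(2)[of n] p(2)[of "Suc n"] Cq(1) by (simp add: field_simps)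
    ultimately show ?thesis by (metis ennreal_leI order_trans)
  qed
  have "\<not> ((\<lambda>t. fundf M N t * rearr M (modf f) t) \<longlongrightarrow> 0) at_top"
  proof
    assume lim: "((\<lambda>t. fundf M N t * rearr M (modf f) t) \<longlongrightarrow> 0) at_top"
    have "0 < 1 / (2 * Cq)" using Cq(1) by simp
    then have "eventually (\<lambda>t. fundf M N t * rearr M w t < ennreal (1 / (2 * Cq))) at_top"
      using order_tendstoD(2)[OF lim[unfolded mf]] by simp
    then obtain T where T: "\<And>t. T \<le> t \<Longrightarrow> fundf M N t * rearr M w t < ennreal (1 / (2 * Cq))"
      unfolding eventually_at_top_linorder by blast
    obtain n where "T < 2^n" using real_arch_pow[of 2 T] by auto
    then show False using T[of "2^n"] lower[of n] by simp
  qed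
  then show ?thesis using fsp by blast
qed

lemma char: "acpart M (marc M N) =
           {f \<in> fspace M (marc M N).
              ((\<lambda>t. fundf M N t * rearr M (modf f) t) \<longlongrightarrow> 0) (at_right 0) \<and>
              ((\<lambda>t. fundf M N t * rearr M (modf f) t) \<longlongrightarrow> 0) at_top}"
proof
  show "acpart M (marc M N) \<subseteq> {f \<in> fspace M (marc M N).
              ((\<lambda>t. fundf M N t * rearr M (modf f) t) \<longlongrightarrow> 0) (at_right 0) \<and>
              ((\<lambda>t. fundf M N t * rearr M (modf f) t) \<longlongrightarrow> 0) at_top}"
  proof
    fix f assume f: "f \<in> acpart M (marc M N)"
    have "f \<in> fspace M (marc M N)" using f unfolding acpart_def by blast
    then show "f \<in> {f \<in> fspace M (marc M N).
              ((\<lambda>t. fundf M N t * rearr M (modf f) t) \<longlongrightarrow> 0) (at_right 0) \<and>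
              ((\<lambda>t. fundf M N t * rearr M (modf f) t) \<longlongrightarrow> 0) at_top}"
      using partB0[OF f] partBinf[OF f] by blast
  qed
next
  show "{f \<in> fspace M (marc M N).
              ((\<lambda>t. fundf M N t * rearr M (modf f) t) \<longlongrightarrow> 0) (at_right 0) \<and>
              ((\<lambda>t. fundf M N t * rearr M (modf f) t) \<longlongrightarrow> 0) at_top} \<subseteq> acpart M (marc M N)"
    using partA by blast
qed

lemma main: "acpart M (marc M N) =
           {f \<in> fspace M (marc M N).
              ((\<lambda>t. fundf M N t * rearr M (modf f) t) \<longlongrightarrow> 0) (at_right 0) \<and>
              ((\<lambda>t. fundf M N t * rearr M (modf f) t) \<longlongrightarrow> 0) at_top}
       \<and> acpart M (marc M N) \<noteq> fspace M (marc M N)"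
proof
  show "acpart M (marc M N) =
           {f \<in> fspace M (marc M N).
              ((\<lambda>t. fundf M N t * rearr M (modf f) t) \<longlongrightarrow> 0) (at_right 0) \<and>
              ((\<lambda>t. fundf M N t * rearr M (modf f) t) \<longlongrightarrow> 0) at_top}" by (rule char)
  obtain f where f: "f \<in> fspace M (marc M N)" "\<not> ((\<lambda>t. fundf M N t * rearr M (modf f) t) \<longlongrightarrow> 0) at_top"
    using witness by blast
  have "f \<notin> acpart M (marc M N)" using f(2) partBinf by blast
  then show "acpart M (marc M N) \<noteq> fspace M (marc M N)" using f(1) by blast
qed

end

theorem mainTheorem12:
  fixes M :: "'a measure" and N :: "('a \<Rightarrow> ennreal) \<Rightarrow> ennreal"
  assumes "sigma_finite_measure M"
    and "nonatomic M"
    and "emeasure M (space M) = \<infinity>"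
    and "qbfn M N" and "rinv M N"
  shows "acpart M (marc M N) =
           {f \<in> fspace M (marc M N).
              ((\<lambda>t. fundf M N t * rearr M (modf f) t) \<longlongrightarrow> 0) (at_right 0) \<and>
              ((\<lambda>t. fundf M N t * rearr M (modf f) t) \<longlongrightarrow> 0) at_top}
       \<and> acpart M (marc M N) \<noteq> fspace M (marc M N)"
  by (rule ctx.main[OF ctx.intro[OF assms]])


end
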